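(* Fix an integer $d\geq 2$, a cost map $\mathcal{M}:[0,1]^d\to\mathbb{R}$ and points $S,T\in[0,1]^d$ such that $S\preceq_{\delta''}T$ for some constant $0<\delta''\leq 1$. Let $\vec\sigma^*$ be a robustly-optimal monotone path in $\Sigma(S,T)$ for $\langle\mathcal{M},S,T\rangle$. Let $\mathcal{G}_n=\mathcal{G}(\mathcal{X}_n\cup\{S,T\};r_n)$ be the random geometric graph with $r_n=f_n\left(\frac{\log n}{n}\right)^{1/d}$, where $f_n\to\infty$ as $n\to\infty$. Then, almost surely, $\mathcal{G}_n$ contains a monotone path $\vec\sigma_n\in\Sigma(S,T)$ such that $\mathcal{M}(\vec\sigma_n)=(1+o(1))\,\mathcal{M}(\vec\sigma^* )$.
   Context: Logarithms are natural. For $p=(p_1,\dots,p_d),p'=(p'_1,\dots,p'_d)\in\mathbb{R}^d$, $p\preceq p'$ means $p_i\leq p'_i$ for all $i$; for $\delta>0$, $p\preceq_\delta p'$ means $p\preceq p'$ and $\min_i(p'_i-p_i)=\delta$. A path is a continuous map $\sigma:[0,1]\to\mathbb{R}^d$, with image $\textup{Im}(\sigma)$; $\Sigma(S,T)$ is the set of continuous paths $\sigma:[0,1]\to[0,1]^d$ with $\sigma(0)=S,\sigma(1)=T$. A path is monotone if $\sigma(\tau)\preceq\sigma(\tau')$ whenever $0\le\tau\le\tau'\le1$. The bottleneck cost is $\mathcal{M}(\sigma)=\max_{\tau\in[0,1]}\mathcal{M}(\sigma(\tau))$. $\mathcal{B}_r(\sigma)$ is the union of Euclidean balls of radius $r$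 centered at points of $\textup{Im}(\sigma)$. A path $\sigma\in\Sigma(S,T)$ is robust if for every $\varepsilon>0$ there is $\delta>0$ with $\mathcal{M}(\sigma')\leq(1+\varepsilon)\mathcal{M}(\sigma)$ for every $\sigma'\in\Sigma(S,T)$ with $\textup{Im}(\sigma')\subset\mathcal{B}_\delta(\sigma)$; a robustly-optimal monotone path is a robust monotone path attaining the infimum cost over robust monotone paths. $\mathcal{X}_n$ consists of $n$ independent uniform points in $[0,1]^d$. $\mathcal{G}(V;r)$ is the directed graph on $V$ with edges $(x,y)$ for $x\neq y$, $\|x-y\|_2\leq r$, each edge viewed as the straight segment between its endpoints; a path in the graph is monotone if each traversed edge $(x,y)$ satisfies $x\preceq y$. An event holds almost surely (a.s.) if its probability tends to $1$ as $n\to\infty$. *)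

theory Defs
  imports "HOL-Probability.Probability"
begin

text \<open>Points of [0,1]^d are vectors of type real^'d; the dimension is d = CARD('d).\<close>

definition unit_cube :: "(real ^ 'd) set" where
  "unit_cube = {x. \<forall>i. 0 \<le> x $ i \<and> x $ i \<le> 1}"

definition prec :: "real ^ 'd \<Rightarrow> real ^ 'd \<Rightarrow> bool" where
  "prec p q \<longleftrightarrow> (\<forall>i. p $ i \<le> q $ i)"

definition prec_delta :: "real \<Rightarrow> real ^ 'd \<Rightarrow> real ^ 'd \<Rightarrow> bool" where
  "prec_delta \<delta> p q \<longleftrightarrow> prec p q \<and> Min (range (\<lambda>i. q $ i - p $ i)) = \<delta>"

definition paths_ST :: "real ^ 'd \<Rightarrow> real ^ 'd \<Rightarrow> (real \<Rightarrow> real ^ 'd) set" where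
  "paths_ST S T = {\<sigma>. continuous_on {0..1} \<sigma> \<and> \<sigma> ` {0..1} \<subseteq> unit_cube
                        \<and> \<sigma> 0 = S \<and> \<sigma> 1 = T}"

definition monotone_path :: "(real \<Rightarrow> real ^ 'd) \<Rightarrow> bool" where
  "monotone_path \<sigma> \<longleftrightarrow> (\<forall>\<tau> \<tau>'. 0 \<le> \<tau> \<and> \<tau> \<le> \<tau>' \<and> \<tau>' \<le> 1 \<longrightarrow> prec (\<sigma> \<tau>) (\<sigma> \<tau>'))"

definition set_cost :: "(real ^ 'd \<Rightarrow> real) \<Rightarrow> (real ^ 'd) set \<Rightarrow> ereal" where
  "set_cost M A = (SUP x\<in>A. ereal (M x))"

definition path_cost :: "(real ^ 'd \<Rightarrow> real) \<Rightarrow> (real \<Rightarrow> real ^ 'd) \<Rightarrow> ereal" where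
  "path_cost M \<sigma> = set_cost M (\<sigma> ` {0..1})"

definition tube :: "real \<Rightarrow> (real \<Rightarrow> real ^ 'd) \<Rightarrow> (real ^ 'd) set" where
  "tube r \<sigma> = (\<Union>x\<in>\<sigma> ` {0..1}. ball x r)"

definition robust_path :: "(real ^ 'd \<Rightarrow> real) \<Rightarrow> real ^ 'd \<Rightarrow> real ^ 'd \<Rightarrow> (real \<Rightarrow> real ^ 'd) \<Rightarrow> bool" where
  "robust_path M S T \<sigma> \<longleftrightarrow> \<sigma> \<in> paths_ST S T \<and>
     (\<forall>\<epsilon>>0. \<exists>\<delta>>0. \<forall>\<sigma>'\<in>paths_ST S T. \<sigma>' ` {0..1} \<subseteq> tube \<delta> \<sigma> \<longrightarrow>
         path_cost M \<sigma>' \<le> ereal (1 + \<epsilon>) * path_cost M \<sigma>)"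

definition robustly_optimal_monotone :: "(real ^ 'd \<Rightarrow> real) \<Rightarrow> real ^ 'd \<Rightarrow> real ^ 'd \<Rightarrow> (real \<Rightarrow> real ^ 'd) \<Rightarrow> bool" where
  "robustly_optimal_monotone M S T \<sigma> \<longleftrightarrow> robust_path M S T \<sigma> \<and> monotone_path \<sigma> \<and>
     path_cost M \<sigma> = (INF \<rho>\<in>{\<rho>. robust_path M S T \<rho> \<and> monotone_path \<rho>}. path_cost M \<rho>)"

definition graph_monotone_path :: "(real ^ 'd) set \<Rightarrow> real \<Rightarrow> real ^ 'd \<Rightarrow> real ^ 'd \<Rightarrow> (real ^ 'd) list \<Rightarrow> bool" where
  "graph_monotone_path V r S T vs \<longleftrightarrow> vs \<noteq> [] \<and> hd vs = S \<and> last vs = T \<and> set vs \<subseteq> V \<and>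
     (\<forall>i. Suc i < length vs \<longrightarrow>
        vs ! i \<noteq> vs ! Suc i \<and> norm (vs ! i - vs ! Suc i) \<le> r \<and> prec (vs ! i) (vs ! Suc i))"

definition polyline_image :: "(real ^ 'd) list \<Rightarrow> (real ^ 'd) set" where
  "polyline_image vs = set vs \<union> (\<Union>i\<in>{i. Suc i < length vs}. closed_segment (vs ! i) (vs ! Suc i))"

definition unif_cube :: "(real ^ 'd) measure" where
  "unif_cube = uniform_measure lborel unit_cube"

definition sample_space :: "nat \<Rightarrow> (nat \<Rightarrow> real ^ 'd) measure" where
  "sample_space n = PiM {..<n} (\<lambda>_. unif_cube)"

end

theory Submission
  imports Defs
begin


definition gbox :: "nat \<Rightarrow> ('d \<Rightarrow> nat) \<Rightarrow> (real^'d) set" where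
  "gbox m j = box (\<chi> i. real (j i) / real m) (\<chi> i. (real (j i) + 1) / real m)"

lemma unit_cube_cbox: "unit_cube = cbox (\<chi> i. 0) ((\<chi> i. 1) :: real^'d)"
  by (auto simp: unit_cube_def mem_box_cart)

lemma prod_basis_const:
  "(\<Prod>b\<in>(Basis :: (real^'d) set). (\<chi> i. c) \<bullet> b) = c ^ CARD('d)"
proof -
  have "(\<Prod>b\<in>(Basis :: (real^'d) set). (\<chi> i. c) \<bullet> b) = (\<Prod>b\<in>(Basis :: (real^'d) set). c)"
    by (rule prod.cong) (auto simp: Basis_vec_def inner_axis)
  also have "\<dots> = c ^ CARD('d)" by (simp add: DIM_cart)
  finally show ?thesis .
qed

lemma emeasure_unit_cube: "emeasure lborel (unit_cube :: (real^'d) set) = 1"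
proof -
  have "emeasure lborel (unit_cube :: (real^'d) set) = ennreal (\<Prod>b\<in>(Basis :: (real^'d) set). (((\<chi> i. 1) :: real^'d) - (\<chi> i. 0)) \<bullet> b)"
    unfolding unit_cube_cbox
    by (rule emeasure_lborel_cbox) (auto simp: Basis_vec_def inner_axis)
  also have "((\<chi> i. 1) :: real^'d) - (\<chi> i. 0) = (\<chi> i. 1)"
    by (simp add: vec_eq_iff)
  finally show ?thesis by (simp add: prod_basis_const)
qed

lemma prob_unif: "prob_space (unif_cube :: (real^'d) measure)"
  unfolding unif_cube_def by (rule prob_space_uniform_measure) (auto simp: emeasure_unit_cube)

lemma gbox_sub: "j \<in> {j. \<forall>i. j i < m} \<Longrightarrow> gbox m j \<subseteq> unit_cube"
proof
  fix x assume j: "j \<in> {j. \<forall>i. j i < m}" and x: "x \<in> gbox m j"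
  show "x \<in> unit_cube" unfolding unit_cube_def
  proof (intro CollectI allI conjI)
    fix i
    have m: "real m > 0" using j by auto
    have a: "real (j i) / real m < x $ i" "x $ i < (real (j i) + 1) / real m"
      using x by (auto simp: gbox_def mem_box_cart)
    have "j i + 1 \<le> m" using j by (simp add: Suc_le_eq)
    then have "real (j i) + 1 \<le> real m" by (metis of_nat_1 of_nat_add of_nat_le_iff)
    then have "(real (j i) + 1) / real m \<le> 1" using m by simp
    then show "x $ i \<le> 1" using a by linarith
    show "0 \<le> x $ i" using a(1) m by (smt (verit) divide_nonneg_pos of_nat_0_le_iff)
  qed
qed

lemma emeasure_gbox:
  assumes "\<forall>i. j i < m"
  shows "emeasure lborel (gbox m j :: (real^'d) set) = ennreal ((1 / real m) ^ CARD('d))"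
proof -
  have m: "m > 0" using assms by (metis gr_zeroI less_nat_zero_code)
  have "emeasure lborel (gbox m j :: (real^'d) set) = ennreal (\<Prod>b\<in>(Basis :: (real^'d) set).
     ((\<chi> i. (real (j i) + 1) / real m) - (\<chi> i. real (j i) / real m)) \<bullet> b)"
    unfolding gbox_def
    by (rule emeasure_lborel_box) (auto simp: Basis_vec_def inner_axis divide_right_mono)
  also have "((\<chi> i. (real (j i) + 1) / real m) - (\<chi> i. real (j i) / real m)) = (\<chi> i. 1 / real m)"
    using m by (simp add: vec_eq_iff field_simps)
  finally show ?thesis by (simp add: prod_basis_const)
qed

lemma psf: "product_sigma_finite (\<lambda>_. (unif_cube :: (real^'d) measure))"
  unfolding product_sigma_finite_def using prob_unif prob_space_imp_sigma_finite by blast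

lemma space_unif: "space (unif_cube :: (real^'d) measure) = UNIV"
  by (simp add: unif_cube_def)

lemma sets_unif: "sets (unif_cube :: (real^'d) measure) = sets lborel"
  by (simp add: unif_cube_def)

lemma emeasure_unif_compl:
  assumes B: "B \<in> sets lborel" "B \<subseteq> (unit_cube :: (real^'d) set)"
  shows "emeasure unif_cube (UNIV - B) = ennreal (1 - measure lborel B)"
proof -
  have cs: "unit_cube \<in> sets (lborel :: (real^'d) measure)"
    unfolding unit_cube_cbox by simp
  have fin: "emeasure lborel B \<noteq> \<infinity>"
    proof -
    have le: "emeasure lborel B \<le> emeasure lborel (unit_cube :: (real^'d) set)" by (rule emeasure_mono[OF B(2) cs])
    have "emeasure lborel B \<le> 1" using le unfolding emeasure_unit_cube .
    then have "emeasure lborel B < top" using le_less_trans ennreal_one_less_top by blast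
    then show ?thesis by simp
  qed
  have "emeasure unif_cube (UNIV - B) = emeasure lborel (unit_cube \<inter> (UNIV - B)) / emeasure lborel (unit_cube :: (real^'d) set)"
    unfolding unif_cube_def by (rule emeasure_uniform_measure) (use cs B in auto)
  also have "unit_cube \<inter> (UNIV - B) = unit_cube - B" by auto
  also have "emeasure lborel (unit_cube - B) = emeasure lborel (unit_cube :: (real^'d) set) - emeasure lborel B"
    by (rule emeasure_Diff) (use fin cs B in auto)
  also have "emeasure lborel B = ennreal (measure lborel B)"
    using fin by (simp add: emeasure_eq_ennreal_measure)
  also have "emeasure lborel (unit_cube :: (real^'d) set) = ennreal 1"
    using emeasure_unit_cube by (metis ennreal_1)
  also have "ennreal 1 - ennreal (measure lborel B) = ennreal (1 - measure lborel B)"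
    by (rule ennreal_minus) simp
  finally have "emeasure unif_cube (UNIV - B) = ennreal (1 - measure lborel B) / ennreal 1" .
  then show ?thesis by (simp add: divide_ennreal_def)
qed

lemma measure_le1:
  assumes B: "B \<in> sets lborel" "B \<subseteq> (unit_cube :: (real^'d) set)"
  shows "measure lborel B \<le> 1"
proof -
  have cs: "unit_cube \<in> sets (lborel :: (real^'d) measure)"
    unfolding unit_cube_cbox by simp
  have "emeasure lborel B \<le> 1"
  proof -
    have le: "emeasure lborel B \<le> emeasure lborel (unit_cube :: (real^'d) set)" by (rule emeasure_mono[OF B(2) cs])
    show ?thesis using le unfolding emeasure_unit_cube .
  qed
  then show ?thesis by (simp add: measure_def enn2real_leI)
qed


lemma prob_all_miss:
  assumes B: "B \<in> sets lborel" "B \<subseteq> (unit_cube :: (real^'d) set)"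
  shows "{\<omega> \<in> space (sample_space n). \<forall>i<n. \<omega> i \<notin> B} \<in> sets (sample_space n)"
    and "measure (sample_space n) {\<omega> \<in> space (sample_space n). \<forall>i<n. \<omega> i \<notin> B}
           = (1 - measure lborel B) ^ n"
proof -
  have eq: "{\<omega> \<in> space (sample_space n). \<forall>i<n. \<omega> i \<notin> B} = PiE {..<n} (\<lambda>_. UNIV - B)"
    by (auto simp: sample_space_def space_PiM space_unif PiE_def Pi_def)
  show "{\<omega> \<in> space (sample_space n). \<forall>i<n. \<omega> i \<notin> B} \<in> sets (sample_space n)"
    unfolding eq unfolding sample_space_def
    by (rule sets_PiM_I_finite) (use B in \<open>auto simp: sets_unif\<close>)
  have "emeasure (sample_space n) {\<omega> \<in> space (sample_space n). \<forall>i<n. \<omega> i \<notin> B}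
      = (\<Prod>i\<in>{..<n}. emeasure unif_cube (UNIV - B))"
    unfolding eq unfolding sample_space_def
    by (rule product_sigma_finite.emeasure_PiM[OF psf]) (use B in \<open>auto simp: sets_unif\<close>)
  also have "\<dots> = ennreal ((1 - measure lborel B) ^ n)"
    using B measure_le1[OF B] by (simp only: emeasure_unif_compl prod_constant card_lessThan ennreal_power)
  finally show "measure (sample_space n) {\<omega> \<in> space (sample_space n). \<forall>i<n. \<omega> i \<notin> B}
           = (1 - measure lborel B) ^ n"
    using measure_le1[OF B] by (simp add: measure_def)
qed

definition grid :: "nat \<Rightarrow> ('d::finite \<Rightarrow> nat) set" where "grid m = {j. \<forall>i. j i < m}"

lemma grid_PiE: "grid m = PiE UNIV (\<lambda>_. {..<m})"
  by (auto simp: grid_def PiE_def Pi_def extensional_def)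

lemma card_grid: "card (grid m :: ('d::finite \<Rightarrow> nat) set) = m ^ CARD('d)"
  unfolding grid_PiE by (simp add: card_PiE)

lemma finite_grid: "finite (grid m :: ('d::finite \<Rightarrow> nat) set)"
  unfolding grid_PiE by (simp add: finite_PiE)

definition good :: "nat \<Rightarrow> nat \<Rightarrow> (nat \<Rightarrow> real^'d) set" where
  "good n m = space (sample_space n) -
     (\<Union>j\<in>grid m. {\<omega> \<in> space (sample_space n). \<forall>i<n. \<omega> i \<notin> gbox m j})"

lemma gbox_sets: "gbox m j \<in> sets lborel"
  unfolding gbox_def by simp

lemma measure_gbox: "j \<in> grid m \<Longrightarrow> measure lborel (gbox m j :: (real^'d) set) = (1 / real m) ^ CARD('d)"
  using emeasure_gbox[where j=j and m=m] by (simp add: grid_def measure_def)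

lemma good_prop: "\<omega> \<in> good n m \<Longrightarrow> j \<in> grid m \<Longrightarrow> \<exists>i<n. \<omega> i \<in> gbox m j"
  unfolding good_def by blast

lemma good_sets_and_prob:
  shows "(good n m :: (nat \<Rightarrow> real^'d) set) \<in> sets (sample_space n)"
    and "measure (sample_space n) (good n m :: (nat \<Rightarrow> real^'d) set)
           \<ge> 1 - real m ^ CARD('d) * (1 - (1 / real m) ^ CARD('d)) ^ n"
proof -
  interpret P: prob_space "sample_space n :: (nat \<Rightarrow> real^'d) measure"
    unfolding sample_space_def by (rule prob_space_PiM) (rule prob_unif)
  define A where "A j = {\<omega> \<in> space (sample_space n). \<forall>i<n. \<omega> i \<notin> (gbox m j :: (real^'d) set)}" for j
  have Aev: "A j \<in> P.events" if "j \<in> grid m" for j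
    unfolding A_def using that gbox_sub[where j=j and m=m] by (intro prob_all_miss(1) gbox_sets) (auto simp: grid_def)
  have Ameas: "P.prob (A j) = (1 - (1 / real m) ^ CARD('d)) ^ n" if "j \<in> grid m" for j
  proof -
    have sub: "gbox m j \<subseteq> (unit_cube :: (real^'d) set)" using that gbox_sub[where j=j and m=m] by (auto simp: grid_def)
    show ?thesis unfolding A_def prob_all_miss(2)[OF gbox_sets sub] measure_gbox[OF that] ..
  qed
  have U: "(\<Union>j\<in>grid m. A j) \<in> P.events"
    using Aev finite_grid by (intro sets.finite_UN) auto
  have g: "good n m = space (sample_space n) - (\<Union>j\<in>grid m. A j)"
    unfolding good_def A_def by simp
  show "(good n m :: (nat \<Rightarrow> real^'d) set) \<in> sets (sample_space n)" unfolding g using U by auto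
  have "P.prob (\<Union>j\<in>grid m. A j) \<le> (\<Sum>j\<in>grid m. P.prob (A j))"
    by (rule measure_subadditive_finite) (use finite_grid Aev in \<open>auto simp: P.emeasure_eq_measure\<close>)
  also have "\<dots> = real m ^ CARD('d) * (1 - (1 / real m) ^ CARD('d)) ^ n"
    using Ameas card_grid[where 'd='d, of m] by simp
  finally show "P.prob (good n m) \<ge> 1 - real m ^ CARD('d) * (1 - (1 / real m) ^ CARD('d)) ^ n"
    unfolding g using P.prob_compl[OF U] by simp
qed

fun polypath :: "(real^'d) list \<Rightarrow> real \<Rightarrow> real^'d" where
  "polypath [] = linepath 0 0"
| "polypath [x] = linepath x x"
| "polypath (x # y # zs) = linepath x y +++ polypath (y # zs)"

lemma polyline_single: "polyline_image [x] = {x}"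
  by (simp add: polyline_image_def)

lemma polyline_Cons2: "polyline_image (x#y#zs) = closed_segment x y \<union> polyline_image (y#zs)"
proof -
  have I: "{i. Suc i < length (x#y#zs)} = insert 0 (Suc ` {i. Suc i < length (y#zs)})"
    by (auto simp: image_iff) (metis Suc_less_SucD not0_implies_Suc)
  show ?thesis
    unfolding polyline_image_def I by auto
qed

lemma polypath_props:
  "vs \<noteq> [] \<Longrightarrow> path (polypath vs) \<and> pathstart (polypath vs) = hd vs \<and>
     pathfinish (polypath vs) = last vs \<and> path_image (polypath vs) = polyline_image vs"
proof (induction vs rule: polypath.induct)
  case 1 then show ?case by simp
next
  case (2 x) then show ?case by (auto simp: polyline_single path_def pathstart_def pathfinish_def path_image_def)
next
  case (3 x y zs)
  then have IH: "path (polypath (y # zs))" "pathstart (polypath (y # zs)) = y"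
     "pathfinish (polypath (y # zs)) = last (y#zs)" "path_image (polypath (y # zs)) = polyline_image (y#zs)"
    by auto
  show ?case using IH
    by (simp add: path_image_join polyline_Cons2)
qed



lemma mono_comp:
  assumes "monotone_path \<sigma>" "0 \<le> a" "a \<le> b" "b \<le> 1"
  shows "\<sigma> a $ i \<le> \<sigma> b $ i"
  using assms unfolding monotone_path_def prec_def by blast

lemma param_points:
  fixes \<sigma> :: "real \<Rightarrow> real^'d"
  assumes \<sigma>: "\<sigma> \<in> paths_ST S T" "monotone_path \<sigma>" and N: "N > 0"
  shows "\<exists>tt. (\<forall>k\<le>N. tt k \<in> {0..1} \<and>
            tt k + (\<Sum>i\<in>UNIV. \<sigma> (tt k) $ i) = (\<Sum>i\<in>UNIV. S $ i) + real k / real N * (1 + (\<Sum>i\<in>UNIV. T $ i - S $ i)))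
         \<and> tt 0 = 0 \<and> tt N = 1 \<and> (\<forall>k k'. k \<le> k' \<and> k' \<le> N \<longrightarrow> tt k \<le> tt k')"
proof -
  define \<phi> where "\<phi> t = t + (\<Sum>i\<in>UNIV. \<sigma> t $ i)" for t
  define \<Phi> where "\<Phi> = 1 + (\<Sum>i\<in>UNIV. T $ i - S $ i)"
  have s0: "\<sigma> 0 = S" and s1: "\<sigma> 1 = T" and cont: "continuous_on {0..1} \<sigma>"
    using \<sigma>(1) by (auto simp: paths_ST_def)
  have phi0: "\<phi> 0 = (\<Sum>i\<in>UNIV. S $ i)" by (simp add: \<phi>_def s0)
  have phi1: "\<phi> 1 = (\<Sum>i\<in>UNIV. S $ i) + \<Phi>" by (simp add: \<phi>_def \<Phi>_def s1 sum_subtractf)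
  have phic: "continuous_on {0..1} \<phi>"
    unfolding \<phi>_def by (intro continuous_intros continuous_on_component cont)
  have strict: "\<phi> a < \<phi> b" if "0 \<le> a" "a < b" "b \<le> 1" for a b
  proof -
    have "(\<Sum>i\<in>UNIV. \<sigma> a $ i) \<le> (\<Sum>i\<in>UNIV. \<sigma> b $ i)"
      by (rule sum_mono) (use mono_comp[OF \<sigma>(2)] that in auto)
    then show ?thesis using that by (simp add: \<phi>_def)
  qed
  have Phipos: "\<Phi> \<ge> 1"
  proof -
    have "(\<Sum>i\<in>UNIV. T $ i - S $ i) \<ge> 0"
      by (rule sum_nonneg) (use mono_comp[OF \<sigma>(2), of 0 1] s0 s1 in auto)
    then show ?thesis by (simp add: \<Phi>_def)
  qed
  define v where "v k = (\<Sum>i\<in>UNIV. S $ i) + real k / real N * \<Phi>" for k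
  have ex: "\<exists>t. t \<in> {0..1} \<and> \<phi> t = v k" if "k \<le> N" for k
  proof -
    have "real k / real N \<le> 1" using that N by simp
    then have "real k / real N * \<Phi> \<le> 1 * \<Phi>" using Phipos by (intro mult_right_mono) auto
    then have "\<phi> 0 \<le> v k" "v k \<le> \<phi> 1" using Phipos by (auto simp: phi0 phi1 v_def)
    from IVT'[OF this(1) this(2) _ phic] show ?thesis by auto
  qed
  define tt where "tt k = (if k = 0 then 0 else if k = N then 1 else SOME t. t \<in> {0..1} \<and> \<phi> t = v k)" for k
  have tt: "tt k \<in> {0..1} \<and> \<phi> (tt k) = v k" if "k \<le> N" for k
  proof (cases "k = 0 \<or> k = N")
    case True then show ?thesis using N by (auto simp: tt_def phi0 phi1 v_def)
  next
    case False then show ?thesis unfolding tt_def using someI_ex[OF ex[OF that]] by auto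
  qed
  have mono: "tt k \<le> tt k'" if "k \<le> k'" "k' \<le> N" for k k'
  proof (rule ccontr)
    assume "\<not> tt k \<le> tt k'"
    then have "\<phi> (tt k') < \<phi> (tt k)" using tt[of k] tt[of k'] that by (intro strict) auto
    moreover have "v k \<le> v k'" unfolding v_def using that Phipos N
      by (auto intro!: mult_right_mono divide_right_mono)
    ultimately show False using tt[of k] tt[of k'] that by auto
  qed
  show ?thesis
    by (rule exI[of _ tt]) (use tt mono N in \<open>auto simp: tt_def \<phi>_def v_def \<Phi>_def\<close>)
qed

lemma norm3:
  fixes a b c d :: "'a::real_normed_vector"
  shows "norm (a - d) \<le> norm (a - b) + norm (b - c) + norm (c - d)"
proof -
  have "norm (a - c) \<le> norm (a - b) + norm (b - c)" by (rule norm_diff_triangle_le) auto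
  then show ?thesis by (rule norm_diff_triangle_le) simp
qed

lemma det:
  fixes \<sigma> :: "real \<Rightarrow> real^'d" and S T :: "real^'d"
  assumes \<sigma>: "\<sigma> \<in> paths_ST S T" "monotone_path \<sigma>"
    and gap: "\<And>i. T$i - S$i \<ge> \<delta>''" and dpos: "\<delta>'' > 0" and \<delta>: "\<delta> > 0"
  shows "\<exists>C>0. \<exists>m0>0. \<forall>m\<ge>m0. \<forall>V. (\<forall>j\<in>grid m. \<exists>x\<in>V. x \<in> gbox m j) \<longrightarrow>
     (\<exists>vs. graph_monotone_path (V \<union> {S,T}) (C / real m) S T vs \<and>
           polyline_image vs \<subseteq> tube \<delta> \<sigma> \<and> polyline_image vs \<subseteq> unit_cube)"
proof -
  define dd where "dd = real CARD('d)"
  have dd1: "dd \<ge> 1" unfolding dd_def using card_ge_0_finite[of "UNIV :: 'd set"] by simp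
  have s0: "\<sigma> 0 = S" and s1: "\<sigma> 1 = T" and img: "\<sigma> ` {0..1} \<subseteq> unit_cube"
    using \<sigma>(1) by (auto simp: paths_ST_def)
  have S_in: "S \<in> unit_cube" using img s0 by force
  have T_in: "T \<in> unit_cube" using img s1 by force
  have S01: "0 \<le> S$i" "S$i \<le> 1" and T01: "0 \<le> T$i" "T$i \<le> 1" for i
    using S_in T_in by (auto simp: unit_cube_def)
  define \<eta> where "\<eta> = min (1/2) (\<delta>/(3*dd))"
  have eta: "0 < \<eta>" "\<eta> \<le> 1/2" "\<eta>*dd \<le> \<delta>/3"
  proof -
    show "0 < \<eta>" using \<delta> dd1 by (simp add: \<eta>_def)
    show "\<eta> \<le> 1/2" by (simp add: \<eta>_def)
    have "\<eta> \<le> \<delta>/(3*dd)" by (simp add: \<eta>_def)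
    then have "\<eta>*dd \<le> \<delta>/(3*dd)*dd" using dd1 by (intro mult_right_mono) auto
    then show "\<eta>*dd \<le> \<delta>/3" using dd1 by simp
  qed
  define C where "C = 2*(1+2*dd)/(\<eta>*\<delta>'') + 2*dd"
  have Cpos: "C > 0" unfolding C_def using eta dpos dd1 by (intro add_pos_pos divide_pos_pos) auto
  define m0 where "m0 = nat \<lceil>max (2/(\<eta>*\<delta>'')) (3*(C+dd)/\<delta>)\<rceil> + 1"
  have main: "\<exists>vs. graph_monotone_path (V \<union> {S,T}) (C / real m) S T vs \<and>
           polyline_image vs \<subseteq> tube \<delta> \<sigma> \<and> polyline_image vs \<subseteq> unit_cube"
    if m: "m \<ge> m0" and occ: "\<forall>j\<in>grid m. \<exists>x\<in>V. x \<in> gbox m j" for m V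
  proof -
    have "real m \<ge> max (2/(\<eta>*\<delta>'')) (3*(C+dd)/\<delta>)"
      using m unfolding m0_def by linarith
    then have m1: "real m \<ge> 2/(\<eta>*\<delta>'')" and m2: "real m \<ge> 3*(C+dd)/\<delta>" by auto
    have mpos: "real m > 0" using m1 eta dpos by (smt (verit) divide_pos_pos mult_pos_pos)
    have med: "real m * \<eta> * \<delta>'' \<ge> 2" using m1 eta dpos by (simp add: field_simps)
    define N where "N = nat \<lfloor>real m * \<eta> * \<delta>''\<rfloor>"
    have N1: "real N \<le> real m * \<eta> * \<delta>''" using med unfolding N_def by linarith
    have N2: "real N \<ge> real m * \<eta> * \<delta>'' / 2"
      using med real_of_int_floor_gt_diff_one[of "real m * \<eta> * \<delta>''"] unfolding N_def by linarith
    have Npos: "N > 0" using N2 med by linarith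
    have invN: "1 / real N \<le> 2 / (real m * \<eta> * \<delta>'')"
      using N2 med Npos by (simp add: field_simps)
    have edN: "\<eta>*\<delta>''/real N \<ge> 1 / real m"
      using N1 Npos mpos by (simp add: field_simps)
    obtain tt where tt: "\<And>k. k\<le>N \<Longrightarrow> tt k \<in> {0..1} \<and>
            tt k + (\<Sum>i\<in>UNIV. \<sigma> (tt k) $ i) = (\<Sum>i\<in>UNIV. S $ i) + real k / real N * (1 + (\<Sum>i\<in>UNIV. T $ i - S $ i))"
      and tt0: "tt 0 = 0" and ttN: "tt N = 1" and ttmono: "\<And>k k'. k \<le> k' \<Longrightarrow> k' \<le> N \<Longrightarrow> tt k \<le> tt k'"
      using param_points[OF \<sigma> Npos] by blast
    have sig_between: "S$i \<le> \<sigma> (tt k) $ i \<and> \<sigma> (tt k) $ i \<le> T$i" if "k \<le> N" for k i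
      using mono_comp[OF \<sigma>(2), of 0 "tt k" i] mono_comp[OF \<sigma>(2), of "tt k" 1 i] tt[OF that] s0 s1 by auto
    define p where "p k = (\<chi> i. (1-\<eta>) * \<sigma> (tt k) $ i + \<eta> * (S$i + real k / real N * (T$i - S$i)))" for k
    have p0: "p 0 = S" by (simp add: p_def tt0 s0 vec_eq_iff algebra_simps)
    have pN: "p N = T" using Npos by (simp add: p_def ttN s1 vec_eq_iff algebra_simps)
    have p_lo: "p k $ i - S$i \<ge> \<eta> * (real k/real N) * \<delta>''" if "k \<le> N" for k i
    proof -
      have "p k $ i - S$i = (1-\<eta>) * (\<sigma> (tt k) $ i - S$i) + \<eta> * (real k/real N) * (T$i - S$i)"
        by (simp add: p_def algebra_simps diff_divide_distrib)
      moreover have "(1-\<eta>) * (\<sigma> (tt k) $ i - S$i) \<ge> 0" using eta sig_between[OF that] by simp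
      moreover have "\<eta> * (real k/real N) * (T$i - S$i) \<ge> \<eta> * (real k/real N) * \<delta>''"
        using gap[of i] eta by (intro mult_left_mono) auto
      ultimately show ?thesis by linarith
    qed
    have p_hi: "T$i - p k $ i \<ge> \<eta> * (1 - real k/real N) * \<delta>''" if "k \<le> N" for k i
    proof -
      have "T$i - p k $ i = (1-\<eta>) * (T$i - \<sigma> (tt k) $ i) + \<eta> * (1 - real k/real N) * (T$i - S$i)"
        by (simp add: p_def algebra_simps diff_divide_distrib)
      moreover have "(1-\<eta>) * (T$i - \<sigma> (tt k) $ i) \<ge> 0" using eta sig_between[OF that] by simp
      moreover have "\<eta> * (1 - real k/real N) * (T$i - S$i) \<ge> \<eta> * (1 - real k/real N) * \<delta>''"
        using gap[of i] eta that Npos by (intro mult_left_mono) auto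
      ultimately show ?thesis by linarith
    qed
    have p_diff: "p (Suc k) $ i - p k $ i = (1-\<eta>) * (\<sigma> (tt (Suc k)) $ i - \<sigma> (tt k) $ i) + \<eta> * (T$i - S$i) / real N" for k i
      using Npos by (simp add: p_def field_simps)
    have sig_inc: "\<sigma> (tt k) $ i \<le> \<sigma> (tt (Suc k)) $ i" if "k < N" for k i
      using mono_comp[OF \<sigma>(2), of "tt k" "tt (Suc k)" i] tt[of k] tt[of "Suc k"] ttmono[of k "Suc k"] that by auto
    have p_inc: "p (Suc k) $ i - p k $ i \<ge> \<eta>*\<delta>''/real N" if "k < N" for k i
    proof -
      have "(1-\<eta>) * (\<sigma> (tt (Suc k)) $ i - \<sigma> (tt k) $ i) \<ge> 0" using eta sig_inc[OF that] by simp
      moreover have "\<eta> * (T$i - S$i) / real N \<ge> \<eta>*\<delta>''/real N"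
        using gap[of i] eta Npos by (intro divide_right_mono mult_left_mono) auto
      ultimately show ?thesis unfolding p_diff by linarith
    qed
    have sumD: "(\<Sum>i\<in>UNIV. T $ i - S $ i) \<le> dd"
    proof -
      have "(\<Sum>i\<in>UNIV. T $ i - S $ i) \<le> (\<Sum>i\<in>(UNIV::'d set). 1)"
        by (rule sum_mono) (use S01 T01 in \<open>smt (verit)\<close>)
      then show ?thesis by (simp add: dd_def)
    qed
    have sumD0: "(\<Sum>i\<in>UNIV. T $ i - S $ i) \<ge> 0"
      by (rule sum_nonneg) (use gap dpos in \<open>smt (verit)\<close>)
    have p_step: "norm (p (Suc k) - p k) \<le> (1+2*dd)/real N" if "k < N" for k
    proof -
      define a where "a = tt k"
      define b where "b = tt (Suc k)"
      have ea: "a + (\<Sum>i\<in>UNIV. \<sigma> a $ i) = (\<Sum>i\<in>UNIV. S $ i) + real k / real N * (1 + (\<Sum>i\<in>UNIV. T $ i - S $ i))"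
        using tt[of k] that unfolding a_def by auto
      have eb: "b + (\<Sum>i\<in>UNIV. \<sigma> b $ i) = (\<Sum>i\<in>UNIV. S $ i) + real (Suc k) / real N * (1 + (\<Sum>i\<in>UNIV. T $ i - S $ i))"
        using tt[of "Suc k"] that unfolding b_def by auto
      have ab: "a \<le> b" unfolding a_def b_def using ttmono[of k "Suc k"] that by auto
      have sdiff: "(\<Sum>i\<in>UNIV. \<sigma> b $ i - \<sigma> a $ i) \<le> (1 + (\<Sum>i\<in>UNIV. T $ i - S $ i)) / real N"
      proof -
        have "(\<Sum>i\<in>UNIV. \<sigma> b $ i - \<sigma> a $ i) = (\<Sum>i\<in>UNIV. \<sigma> b $ i) - (\<Sum>i\<in>UNIV. \<sigma> a $ i)"
          by (simp add: sum_subtractf)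
        also have "\<dots> = (real (Suc k) / real N - real k / real N) * (1 + (\<Sum>i\<in>UNIV. T $ i - S $ i)) - (b - a)"
          using ea eb by (simp add: algebra_simps)
        also have "real (Suc k) / real N - real k / real N = 1 / real N" by (simp add: add_divide_distrib)
        finally show ?thesis using ab by simp
      qed
      have sdiff0: "(\<Sum>i\<in>UNIV. \<sigma> b $ i - \<sigma> a $ i) \<ge> 0"
        by (rule sum_nonneg) (use sig_inc[OF that] in \<open>auto simp: a_def b_def\<close>)
      have "norm (p (Suc k) - p k) \<le> (\<Sum>i\<in>UNIV. \<bar>(p (Suc k) - p k) $ i\<bar>)" by (rule norm_le_l1_cart)
      also have "\<dots> = (\<Sum>i\<in>UNIV. p (Suc k) $ i - p k $ i)"
      proof (rule sum.cong)
        fix i show "\<bar>(p (Suc k) - p k) $ i\<bar> = p (Suc k) $ i - p k $ i"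
        proof -
          have "0 \<le> \<eta> * \<delta>'' / real N" using eta dpos Npos by simp
          then show ?thesis using p_inc[OF that, of i] by simp
        qed
      qed simp
      also have "\<dots> = (1-\<eta>) * (\<Sum>i\<in>UNIV. \<sigma> b $ i - \<sigma> a $ i) + \<eta> * (\<Sum>i\<in>UNIV. T $ i - S $ i) / real N"
        unfolding p_diff a_def b_def by (simp add: sum.distrib sum_distrib_left sum_divide_distrib)
      also have "\<dots> \<le> 1 * ((1 + dd) / real N) + 1 * (dd / real N)"
      proof (rule add_mono)
        show "(1-\<eta>) * (\<Sum>i\<in>UNIV. \<sigma> b $ i - \<sigma> a $ i) \<le> 1 * ((1 + dd) / real N)"
        proof (rule mult_mono)
          show "(\<Sum>i\<in>UNIV. \<sigma> b $ i - \<sigma> a $ i) \<le> (1 + dd) / real N"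
            using sdiff sumD Npos by (smt (verit) divide_right_mono of_nat_0_le_iff)
        qed (use eta sdiff0 in auto)
        have "\<eta> * (\<Sum>i\<in>UNIV. T $ i - S $ i) \<le> 1 * dd"
          using eta sumD sumD0 by (intro mult_mono) auto
        then show "\<eta> * (\<Sum>i\<in>UNIV. T $ i - S $ i) / real N \<le> 1 * (dd / real N)"
          using Npos by (simp add: divide_right_mono)
      qed
      also have "\<dots> = (1+2*dd)/real N" by (simp add: add_divide_distrib[symmetric])
      finally show ?thesis .
    qed
    have p_close: "norm (p k - \<sigma> (tt k)) \<le> \<eta>*dd" if "k \<le> N" for k
    proof -
      have "norm (p k - \<sigma> (tt k)) \<le> (\<Sum>i\<in>UNIV. \<bar>(p k - \<sigma> (tt k)) $ i\<bar>)" by (rule norm_le_l1_cart)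
      also have "\<dots> \<le> (\<Sum>i\<in>(UNIV::'d set). \<eta>)"
      proof (rule sum_mono)
        fix i
        have kN: "real k / real N \<le> 1" "0 \<le> real k / real N" using that Npos by auto
        have e: "(p k - \<sigma> (tt k)) $ i = \<eta> * (S$i + real k / real N * (T$i - S$i) - \<sigma> (tt k) $ i)"
          by (simp add: p_def algebra_simps diff_divide_distrib)
        have "real k / real N * (T$i - S$i) \<le> 1 * (T$i - S$i)" using kN gap[of i] dpos
          by (intro mult_right_mono) auto
        moreover have "real k / real N * (T$i - S$i) \<ge> 0" using kN gap[of i] dpos by simp
        ultimately have "\<bar>S$i + real k / real N * (T$i - S$i) - \<sigma> (tt k) $ i\<bar> \<le> 1"
          using sig_between[OF that, of i] S01[of i] T01[of i] unfolding abs_le_iff mult_1_left by linarith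
        then have "\<eta> * \<bar>S$i + real k / real N * (T$i - S$i) - \<sigma> (tt k) $ i\<bar> \<le> \<eta> * 1"
          using eta by (intro mult_left_mono) auto
        then show "\<bar>(p k - \<sigma> (tt k)) $ i\<bar> \<le> \<eta>" unfolding e using eta by (simp add: abs_mult)
      qed
      also have "\<dots> = \<eta>*dd" by (simp add: dd_def)
      finally show ?thesis .
    qed
    have p_bot: "p k $ i \<ge> S$i + 1/real m" if "0 < k" "k \<le> N" for k i
    proof -
      have "real k / real N \<ge> 1 / real N" using that Npos by (simp add: divide_right_mono)
      then have "\<eta> * (real k/real N) * \<delta>'' \<ge> \<eta> * (1 / real N) * \<delta>''"
        using eta dpos by (intro mult_right_mono mult_left_mono) auto
      then show ?thesis using p_lo[OF that(2), of i] edN by simp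
    qed
    have p_top: "p k $ i \<le> T$i - 1/real m" if "k < N" for k i
    proof -
      have "1 - real k / real N \<ge> 1 / real N" using that Npos by (simp add: field_simps)
      then have "\<eta> * (1 - real k/real N) * \<delta>'' \<ge> \<eta> * (1 / real N) * \<delta>''"
        using eta dpos by (intro mult_right_mono mult_left_mono) auto
      then show ?thesis using p_hi[of k i] that edN by simp
    qed
    have p_nonneg: "p k $ i \<ge> 0" if "k \<le> N" for k i
    proof -
      have "\<eta> * (real k/real N) * \<delta>'' \<ge> 0" using eta dpos by simp
      then show ?thesis using p_lo[OF that, of i] S01[of i] by linarith
    qed
    define jj where "jj k = (\<lambda>i. nat \<lfloor>real m * p k $ i\<rfloor>)" for k
    have jj_real: "real (jj k i) = real_of_int \<lfloor>real m * p k $ i\<rfloor>" if "k \<le> N" for k i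
    proof -
      have "real m * p k $ i \<ge> 0" using mpos p_nonneg[OF that, of i] by simp
      then show ?thesis unfolding jj_def by simp
    qed
    have jj_grid: "jj k \<in> grid m" if "k < N" for k
      unfolding grid_def
    proof (intro CollectI allI)
      fix i
      have "p k $ i \<le> 1 - 1/real m" using p_top[OF that, of i] T01[of i] by linarith
      then have "real m * p k $ i \<le> real m * (1 - 1/real m)" using mpos by (intro mult_left_mono) auto
      also have "\<dots> = real m - 1" using mpos by (simp add: field_simps)
      finally have "real_of_int \<lfloor>real m * p k $ i\<rfloor> < real m"
        using of_int_floor_le[of "real m * p k $ i"] by linarith
      then have "real (jj k i) < real m" using jj_real[of k i] that by simp
      then show "jj k i < m" by simp
    qed
    define x where "x k = (if k = 0 then S else if k = N then T else SOME y. y \<in> V \<and> y \<in> gbox m (jj k))" for k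
    have x_int: "x k \<in> V \<and> x k \<in> gbox m (jj k)" if "0 < k" "k < N" for k
    proof -
      have "\<exists>y. y \<in> V \<and> y \<in> gbox m (jj k)" using occ jj_grid[OF that(2)] by blast
      from someI_ex[OF this] show ?thesis using that by (simp add: x_def)
    qed
    have x_box: "real_of_int \<lfloor>real m * p k $ i\<rfloor> / real m < x k $ i \<and>
                 x k $ i < (real_of_int \<lfloor>real m * p k $ i\<rfloor> + 1) / real m" if "0 < k" "k < N" for k i
    proof -
      have "x k \<in> gbox m (jj k)" using x_int[OF that] by simp
      then have "real (jj k i) / real m < x k $ i \<and> x k $ i < (real (jj k i) + 1) / real m"
        unfolding gbox_def mem_box_cart by simp
      then show ?thesis using jj_real[of k i] that by simp
    qed
    have x_lo: "x k $ i > p k $ i - 1/real m" if "0 < k" "k < N" for k i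
    proof -
      have "real m * p k $ i - 1 < real_of_int \<lfloor>real m * p k $ i\<rfloor>" by (rule real_of_int_floor_gt_diff_one)
      then have "(real m * p k $ i - 1) / real m < real_of_int \<lfloor>real m * p k $ i\<rfloor> / real m"
        using mpos by (simp add: divide_strict_right_mono)
      moreover have "(real m * p k $ i - 1) / real m = p k $ i - 1/real m" using mpos by (simp add: field_simps)
      ultimately show ?thesis using x_box[OF that, of i] by linarith
    qed
    have x_hi: "x k $ i < p k $ i + 1/real m" if "0 < k" "k < N" for k i
    proof -
      have "real_of_int \<lfloor>real m * p k $ i\<rfloor> + 1 \<le> real m * p k $ i + 1" by simp
      then have "(real_of_int \<lfloor>real m * p k $ i\<rfloor> + 1) / real m \<le> (real m * p k $ i + 1) / real m"
        using mpos by (simp add: divide_right_mono)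
      moreover have "(real m * p k $ i + 1) / real m = p k $ i + 1/real m" using mpos by (simp add: field_simps)
      ultimately show ?thesis using x_box[OF that, of i] by linarith
    qed
    have x0: "x 0 = S" by (simp add: x_def)
    have xN: "x N = T" using Npos by (simp add: x_def)
    have x_close_c: "\<bar>x k $ i - p k $ i\<bar> \<le> 1/real m" if "k \<le> N" for k i
    proof (cases "k = 0 \<or> k = N")
      case True then show ?thesis using x0 xN p0 pN mpos by auto
    next
      case False
      then have "0 < k" "k < N" using that by auto
      then show ?thesis using x_lo[of k i] x_hi[of k i] unfolding abs_le_iff by linarith
    qed
    have x_close: "norm (x k - p k) \<le> dd/real m" if "k \<le> N" for k
    proof -
      have "norm (x k - p k) \<le> (\<Sum>i\<in>UNIV. \<bar>(x k - p k) $ i\<bar>)" by (rule norm_le_l1_cart)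
      also have "\<dots> \<le> (\<Sum>i\<in>(UNIV::'d set). 1/real m)"
        by (rule sum_mono) (use x_close_c[OF that] in simp)
      also have "\<dots> = dd/real m" by (simp add: dd_def)
      finally show ?thesis .
    qed
    have x_inc: "x k $ i < x (Suc k) $ i" if "k < N" for k i
    proof -
      consider "k = 0" "Suc k = N" | "k = 0" "Suc k < N" | "0 < k" "Suc k = N" | "0 < k" "Suc k < N"
        using \<open>k < N\<close> by (cases "k = 0"; cases "Suc k = N") auto
      then show ?thesis
      proof cases
        case 1
        have "x (Suc k) = T" using 1 xN by simp
        moreover have "x k = S" using 1 x0 by simp
        ultimately show ?thesis using gap[of i] dpos by simp
      next
        case 2
        have "x (Suc k) $ i > p (Suc k) $ i - 1/real m" using x_lo[of "Suc k" i] 2 by simp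
        moreover have "p (Suc k) $ i \<ge> S$i + 1/real m" using p_bot[of "Suc k" i] 2 by simp
        ultimately show ?thesis using x0 2 by simp
      next
        case 3
        have "x k $ i < p k $ i + 1/real m" using x_hi[of k i] 3 by simp
        moreover have "p k $ i \<le> T$i - 1/real m" using p_top[of k i] 3 by simp
        ultimately show ?thesis using xN 3 by simp
      next
        case 4
        have a: "p k $ i + \<eta>*\<delta>''/real N \<le> p (Suc k) $ i" using p_inc[of k i] 4 by simp
        have "real m * (1/real m) \<le> real m * (\<eta>*\<delta>''/real N)"
          by (rule mult_left_mono[OF edN]) (use mpos in simp)
        then have b: "1 \<le> real m * (\<eta>*\<delta>''/real N)" using mpos by simp
        have "real m * (p k $ i + \<eta>*\<delta>''/real N) \<le> real m * p (Suc k) $ i"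
          by (rule mult_left_mono[OF a]) (use mpos in simp)
        then have "real m * p k $ i + real m * (\<eta>*\<delta>''/real N) \<le> real m * p (Suc k) $ i"
          by (simp only: distrib_left)
        with b have "real m * p k $ i + 1 \<le> real m * p (Suc k) $ i" by linarith
        then have "real_of_int \<lfloor>real m * p k $ i\<rfloor> + 1 \<le> real m * p (Suc k) $ i"
          using of_int_floor_le[of "real m * p k $ i"] by linarith
        then have "real_of_int (\<lfloor>real m * p k $ i\<rfloor> + 1) \<le> real m * p (Suc k) $ i"
          by simp
        then have "\<lfloor>real m * p k $ i\<rfloor> + 1 \<le> \<lfloor>real m * p (Suc k) $ i\<rfloor>"
          by (simp only: le_floor_iff)
        then have "real_of_int (\<lfloor>real m * p k $ i\<rfloor> + 1) \<le> real_of_int \<lfloor>real m * p (Suc k) $ i\<rfloor>"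
          by (simp only: of_int_le_iff)
        then have fl: "real_of_int \<lfloor>real m * p k $ i\<rfloor> + 1 \<le> real_of_int \<lfloor>real m * p (Suc k) $ i\<rfloor>"
          by (simp only: of_int_add of_int_1)
        have "x k $ i < (real_of_int \<lfloor>real m * p k $ i\<rfloor> + 1) / real m" using x_box[of k i] 4 by auto
        also have "\<dots> \<le> real_of_int \<lfloor>real m * p (Suc k) $ i\<rfloor> / real m"
          using fl mpos by (simp add: divide_right_mono)
        also have "\<dots> < x (Suc k) $ i" using x_box[of "Suc k" i] 4 by auto
        finally show ?thesis .
      qed
    qed
    have cube_conv: "convex (unit_cube :: (real^'d) set)" unfolding unit_cube_cbox by (rule convex_box)
    have x_cube: "x k \<in> unit_cube" if "k \<le> N" for k
    proof (cases "k = 0 \<or> k = N")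
      case True then show ?thesis using x0 xN S_in T_in by auto
    next
      case False
      then have "0 < k" "k < N" using that by auto
      then show ?thesis using x_int gbox_sub[of "jj k" m] jj_grid unfolding grid_def by blast
    qed
    have x_step: "norm (x (Suc k) - x k) \<le> C/real m" if "k < N" for k
    proof -
      have "norm (x (Suc k) - x k) \<le> norm (x (Suc k) - p (Suc k)) + norm (p (Suc k) - p k) + norm (p k - x k)"
        by (rule norm3)
      also have "\<dots> \<le> dd/real m + (1+2*dd)/real N + dd/real m"
        using x_close[of "Suc k"] x_close[of k] p_step[OF that] that by (simp add: norm_minus_commute add_mono)
      also have "(1+2*dd)/real N \<le> (1+2*dd) * (2 / (real m * \<eta> * \<delta>''))"
      proof -
        have "(1+2*dd) * (1 / real N) \<le> (1+2*dd) * (2 / (real m * \<eta> * \<delta>''))"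
          using invN dd1 by (intro mult_left_mono) auto
        then show ?thesis by simp
      qed
      also have "dd/real m + (1+2*dd) * (2 / (real m * \<eta> * \<delta>'')) + dd/real m = C / real m"
        unfolding C_def using mpos eta dpos by (simp add: field_simps)
      finally show ?thesis by simp
    qed
    have third: "(C + dd) / real m \<le> \<delta>/3"
      using m2 mpos \<delta> by (simp add: field_simps)
    have x_tube: "y \<in> tube \<delta> \<sigma>" if "k \<le> N" "norm (y - x k) \<le> C/real m" for k y
    proof -
      have "norm (y - \<sigma> (tt k)) \<le> norm (y - x k) + norm (x k - p k) + norm (p k - \<sigma> (tt k))"
        by (rule norm3)
      also have "\<dots> \<le> C/real m + dd/real m + \<eta>*dd"
        using that x_close[OF that(1)] p_close[OF that(1)] by simp
      also have "C/real m + dd/real m = (C+dd)/real m" by (simp add: add_divide_distrib)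
      finally have "norm (y - \<sigma> (tt k)) < \<delta>" using third eta \<delta> by linarith
      then have "y \<in> ball (\<sigma> (tt k)) \<delta>" by (simp add: dist_norm norm_minus_commute)
      moreover have "tt k \<in> {0..1}" using tt[OF that(1)] by simp
      ultimately show ?thesis unfolding tube_def by blast
    qed
    define vs where "vs = map x [0..<Suc N]"
    have len: "length vs = Suc N" by (simp add: vs_def)
    have vs_nth: "vs ! k = x k" if "k \<le> N" for k
      using that by (simp add: vs_def nth_map less_Suc_eq_le del: upt_Suc)
    have setvs: "set vs = x ` {0..N}" unfolding vs_def set_map set_upt atLeastLessThanSuc_atLeastAtMost ..
    have gmp: "graph_monotone_path (V \<union> {S,T}) (C / real m) S T vs"
      unfolding graph_monotone_path_def
    proof (intro conjI allI impI)
      show "vs \<noteq> []" using len by auto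
      have ne: "vs \<noteq> []" using len by auto
      show "hd vs = S" using vs_nth[of 0] x0 hd_conv_nth[OF ne] by simp
      show "last vs = T" using vs_nth[of N] xN last_conv_nth[OF ne] len by simp
      show "set vs \<subseteq> V \<union> {S, T}"
      proof
        fix z assume "z \<in> set vs"
        then obtain k where k: "k \<le> N" "z = x k" using setvs by auto
        show "z \<in> V \<union> {S, T}"
        proof (cases "k = 0 \<or> k = N")
          case True then show ?thesis using x0 xN k by auto
        next
          case False then show ?thesis using x_int[of k] k by auto
        qed
      qed
      fix i assume "Suc i < length vs"
      then have i: "i < N" using len by simp
      then have e: "vs ! i = x i" "vs ! Suc i = x (Suc i)" using vs_nth by auto
      have "x i $ j < x (Suc i) $ j" for j using x_inc[OF i] .
      then show "vs ! i \<noteq> vs ! Suc i" unfolding e by (metis less_irrefl)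
      show "norm (vs ! i - vs ! Suc i) \<le> C / real m" unfolding e using x_step[OF i] by (simp add: norm_minus_commute)
      show "prec (vs ! i) (vs ! Suc i)" unfolding e prec_def using x_inc[OF i] by (simp add: less_imp_le)
    qed
    have poly: "polyline_image vs \<subseteq> tube \<delta> \<sigma> \<inter> unit_cube"
    proof
      fix z assume "z \<in> polyline_image vs"
      then consider "z \<in> set vs" | i where "Suc i < length vs" "z \<in> closed_segment (vs ! i) (vs ! Suc i)"
        unfolding polyline_image_def by blast
      then show "z \<in> tube \<delta> \<sigma> \<inter> unit_cube"
      proof cases
        case 1
        then obtain k where k: "k \<le> N" "z = x k" using setvs by auto
        then show ?thesis using x_tube[of k z] x_cube[of k] Cpos mpos by simp
      next
        case 2
        then have i: "i < N" using len by simp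
        then have e: "vs ! i = x i" "vs ! Suc i = x (Suc i)" using vs_nth by auto
        have zs: "z \<in> closed_segment (x i) (x (Suc i))" using 2 e by simp
        have "norm (z - x i) \<le> norm (x (Suc i) - x i)" by (rule segment_bound(1)[OF zs])
        then have "z \<in> tube \<delta> \<sigma>" using x_tube[of i z] x_step[OF i] i by simp
        moreover have "z \<in> unit_cube"
          using closed_segment_subset[OF x_cube[of i] x_cube[of "Suc i"] cube_conv] zs i by auto
        ultimately show ?thesis by simp
      qed
    qed
    show ?thesis using gmp poly by blast
  qed
  show ?thesis
    apply (rule exI[of _ C])
    apply (rule conjI[OF Cpos])
    apply (rule exI[of _ m0])
    using main by (auto simp: m0_def)
qed



lemma tail:
  fixes m n D :: nat
  assumes D: "D \<ge> 1" and m: "m \<ge> 1" and n: "n \<ge> 2"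
    and X: "real n / real m ^ D \<ge> 2 * ln (real n)"
  shows "real m ^ D * (1 - (1 / real m) ^ D) ^ n \<le> 1 / real n"
proof -
  define q where "q = (1 / real m) ^ D"
  have mD: "real m ^ D \<ge> 1" using m by simp
  have q: "q = 1 / real m ^ D" by (simp add: q_def power_divide)
  have q01: "0 < q" "q \<le> 1"
  proof -
    show "0 < q" using mD m by (simp add: q)
    show "q \<le> 1" unfolding q using mD m by (simp add: divide_le_eq_1)
  qed
  have "1 - q \<le> exp (- q)" using exp_ge_add_one_self[of "-q"] by simp
  then have "(1 - q) ^ n \<le> exp (- q) ^ n" using q01 by (intro power_mono) auto
  also have "\<dots> = exp (real n * (- q))" by (rule exp_of_nat_mult[symmetric])
  also have "real n * (- q) = - (real n / real m ^ D)" by (simp add: q)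
  also have "exp (- (real n / real m ^ D)) \<le> exp (- (2 * ln (real n)))" using X by simp
  also have "exp (- (2 * ln (real n))) = 1 / real n ^ 2"
  proof -
    have "exp (2 * ln (real n)) = real n ^ 2" using n
      by (subst exp_of_nat_mult[of 2, simplified]) simp
    then show ?thesis by (simp add: exp_minus divide_inverse)
  qed
  finally have A: "(1 - q) ^ n \<le> 1 / real n ^ 2" .
  have ln2: "ln (real n) \<ge> 2/3"
  proof -
    have "real n \<ge> 2" using n by simp
    then have "ln 2 \<le> ln (real n)" by (subst ln_le_cancel_iff) auto
    then show ?thesis using ln2_ge_two_thirds by linarith
  qed
  have "real n / real m ^ D \<ge> 1" using X ln2 by linarith
  moreover have "0 < real m ^ D" using mD by linarith
  ultimately have B: "real m ^ D \<le> real n" using le_divide_eq_1_pos by blast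
  have "real m ^ D * (1 - q) ^ n \<le> real n * (1 / real n ^ 2)"
    using A B q01 mD by (intro mult_mono) auto
  also have "\<dots> = 1 / real n" by (simp add: power2_eq_square)
  finally show ?thesis by (simp add: q_def)
qed

lemma powr_root_pow:
  assumes "a > 0" "D \<ge> 1"
  shows "(a powr (1 / real D)) ^ D = a"
proof -
  have "(a powr (1 / real D)) ^ D = (a powr (1 / real D)) powr (real D)"
    using assms by (simp add: powr_realpow)
  also have "\<dots> = a" using assms by (simp add: powr_powr)
  finally show ?thesis .
qed

lemma choose_m:
  fixes f :: "nat \<Rightarrow> real" and C :: real and m0 D :: nat
  assumes C: "C > 0" and m0: "m0 \<ge> 1" and D: "D \<ge> 1" and f: "filterlim f at_top sequentially"
  shows "eventually (\<lambda>n. n \<ge> 2 \<and> nat \<lceil>C / min (f n * (ln (real n) / real n) powr (1 / real D)) (C / real m0)\<rceil> \<ge> m0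
     \<and> C / real (nat \<lceil>C / min (f n * (ln (real n) / real n) powr (1 / real D)) (C / real m0)\<rceil>)
          \<le> f n * (ln (real n) / real n) powr (1 / real D)
     \<and> real n / real (nat \<lceil>C / min (f n * (ln (real n) / real n) powr (1 / real D)) (C / real m0)\<rceil>) ^ D
          \<ge> 2 * ln (real n)) sequentially"
proof -
  define c where "c = (1 / (2 * real m0)) ^ D / 2"
  have cpos: "c > 0" using m0 by (simp add: c_def)
  have ev1: "eventually (\<lambda>n. n \<ge> (2::nat)) sequentially" by (rule eventually_ge_at_top)
  have ev2: "eventually (\<lambda>n. f n \<ge> 4 * C) sequentially" using f by (simp add: filterlim_at_top)
  have ev3: "eventually (\<lambda>n. ln (real n) / real n < c) sequentially"
    using order_tendstoD(2)[OF lim_ln_over_n cpos] .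
  show ?thesis
  proof (rule eventually_mono[OF eventually_conj[OF ev1 eventually_conj[OF ev2 ev3]]], elim conjE)
    fix n :: nat assume n: "n \<ge> 2" and fn: "f n \<ge> 4 * C" and lnc: "ln (real n) / real n < c"
    define a where "a = ln (real n) / real n"
    define r where "r = f n * a powr (1 / real D)"
    define \<rho> where "\<rho> = min r (C / real m0)"
    define mm where "mm = nat \<lceil>C / \<rho>\<rceil>"
    have npos: "real n > 0" using n by simp
    have lnpos: "ln (real n) > 0" using n by simp
    have apos: "a > 0" unfolding a_def using npos lnpos by simp
    have fpos: "f n > 0" using fn C by linarith
    have rpos: "r > 0" unfolding r_def using fpos apos by simp
    have C0: "C / real m0 > 0" using C m0 by simp
    have rhopos: "\<rho> > 0" unfolding \<rho>_def using rpos C0 by simp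
    have rho_le: "\<rho> \<le> C / real m0" "\<rho> \<le> r" unfolding \<rho>_def by auto
    have Crho: "C / \<rho> \<ge> real m0"
    proof -
      have "C / (C / real m0) \<le> C / \<rho>" using rho_le(1) rhopos C m0 by (intro divide_left_mono) auto
      then show ?thesis using C m0 by simp
    qed
    have mm_ge: "real mm \<ge> C / \<rho>" unfolding mm_def by linarith
    have mm_eq: "real mm = real_of_int \<lceil>C / \<rho>\<rceil>"
    proof -
      have "0 < C / \<rho>" using rhopos C by simp
      then have "0 \<le> \<lceil>C / \<rho>\<rceil>" by linarith
      then show ?thesis unfolding mm_def by simp
    qed
    have mm_le: "real mm \<le> C / \<rho> + 1" unfolding mm_eq using ceiling_correct[of "C / \<rho>"] by linarith
    have m1: "mm \<ge> m0" using mm_ge Crho by linarith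
    have mmpos: "real mm > 0" using m1 m0 by simp
    have A: "C / real mm \<le> r"
    proof -
      have "C \<le> real mm * \<rho>" using mm_ge rhopos by (simp add: divide_le_eq)
      then have "C / real mm \<le> \<rho>" using mmpos by (simp add: divide_le_eq mult.commute)
      then show ?thesis using rho_le(2) by linarith
    qed
    define u where "u = \<rho> / (2 * C)"
    have upos: "u > 0" unfolding u_def using rhopos C by simp
    have mm_u: "real mm \<le> 1 / u"
    proof -
      have "C / \<rho> \<ge> 1" using Crho m0 by linarith
      then have "real mm \<le> 2 * (C / \<rho>)" using mm_le by linarith
      also have "\<dots> = 1 / u" unfolding u_def using C rhopos by (simp add: field_simps)
      finally show ?thesis .
    qed
    have X: "real n / real mm ^ D \<ge> real n * u ^ D"
    proof -
      have "real mm ^ D \<le> (1 / u) ^ D" using mm_u mmpos by (intro power_mono) auto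
      then have "real n / (1 / u) ^ D \<le> real n / real mm ^ D"
        using mmpos npos upos by (intro divide_left_mono) auto
      moreover have "real n / (1 / u) ^ D = real n * u ^ D" by (simp add: power_one_over)
      ultimately show ?thesis by simp
    qed
    have Y: "real n * u ^ D \<ge> 2 * ln (real n)"
    proof (cases "r \<le> C / real m0")
      case True
      then have "\<rho> = r" unfolding \<rho>_def by simp
      then have u: "u = (f n / (2 * C)) * a powr (1 / real D)" unfolding u_def r_def by simp
      have "f n / (2 * C) \<ge> 2" using fn C by (simp add: field_simps)
      then have "(f n / (2 * C)) ^ D \<ge> 2 ^ D" by (intro power_mono) auto
      moreover have "(2::real) ^ D \<ge> 2" using D by (metis power_one_right power_increasing one_le_numeral)
      ultimately have fD: "(f n / (2 * C)) ^ D \<ge> 2" by linarith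
      have "u ^ D = (f n / (2 * C)) ^ D * a" unfolding u power_mult_distrib using powr_root_pow[OF apos D] by simp
      then have "real n * u ^ D = (f n / (2 * C)) ^ D * (real n * a)" by simp
      also have "real n * a = ln (real n)" unfolding a_def using npos by simp
      finally have "real n * u ^ D = (f n / (2 * C)) ^ D * ln (real n)" .
      moreover have "(f n / (2 * C)) ^ D * ln (real n) \<ge> 2 * ln (real n)"
        using fD lnpos by (intro mult_right_mono) auto
      ultimately show ?thesis by simp
    next
      case False
      then have "\<rho> = C / real m0" unfolding \<rho>_def by simp
      then have u: "u = 1 / (2 * real m0)" unfolding u_def using C by (simp add: field_simps)
      have "ln (real n) < c * real n" using lnc npos by (simp add: a_def divide_less_eq)
      then show ?thesis unfolding u c_def by (simp add: mult.commute)
    qed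
    show "n \<ge> 2 \<and> nat \<lceil>C / min (f n * (ln (real n) / real n) powr (1 / real D)) (C / real m0)\<rceil> \<ge> m0
     \<and> C / real (nat \<lceil>C / min (f n * (ln (real n) / real n) powr (1 / real D)) (C / real m0)\<rceil>)
          \<le> f n * (ln (real n) / real n) powr (1 / real D)
     \<and> real n / real (nat \<lceil>C / min (f n * (ln (real n) / real n) powr (1 / real D)) (C / real m0)\<rceil>) ^ D
          \<ge> 2 * ln (real n)"
      using n m1 A X Y unfolding mm_def \<rho>_def r_def a_def by linarith
  qed
qed

lemma gmp_mono:
  "graph_monotone_path V r1 S T vs \<Longrightarrow> r1 \<le> r2 \<Longrightarrow> graph_monotone_path V r2 S T vs"
  unfolding graph_monotone_path_def by (meson order_trans)

lemma cost_poly: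
  fixes \<sigma> :: "real \<Rightarrow> real^'d"
  assumes H: "\<forall>\<sigma>'\<in>paths_ST S T. \<sigma>' ` {0..1} \<subseteq> tube \<delta> \<sigma> \<longrightarrow> path_cost M \<sigma>' \<le> B"
    and g: "graph_monotone_path W r S T vs"
    and t: "polyline_image vs \<subseteq> tube \<delta> \<sigma>" and c: "polyline_image vs \<subseteq> unit_cube"
  shows "set_cost M (polyline_image vs) \<le> B"
proof -
  have ne: "vs \<noteq> []" and h: "hd vs = S" and l: "last vs = T"
    using g by (auto simp: graph_monotone_path_def)
  note pp = polypath_props[OF ne]
  have img: "polypath vs ` {0..1} = polyline_image vs" using pp by (simp add: path_image_def)
  have "polypath vs \<in> paths_ST S T"
    unfolding paths_ST_def using pp h l c img
    by (auto simp: path_def pathstart_def pathfinish_def)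
  then have "path_cost M (polypath vs) \<le> B" using H t img by auto
  then show ?thesis by (simp add: path_cost_def img)
qed

theorem theorem6:
  fixes M :: "real ^ 'd \<Rightarrow> real"
    and S T :: "real ^ 'd"
    and \<delta>'' :: real
    and \<sigma>_star :: "real \<Rightarrow> real ^ 'd"
    and f :: "nat \<Rightarrow> real"
  assumes d2: "CARD('d) \<ge> 2"
    and S_in: "S \<in> unit_cube" and T_in: "T \<in> unit_cube"
    and \<delta>_pos: "0 < \<delta>''" and \<delta>_le: "\<delta>'' \<le> 1"
    and ST: "prec_delta \<delta>'' S T"
    and opt: "robustly_optimal_monotone M S T \<sigma>_star"
    and f_lim: "filterlim f at_top sequentially"
  shows "\<forall>\<epsilon>>0. \<exists>E :: nat \<Rightarrow> (nat \<Rightarrow> real ^ 'd) set.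
           (\<forall>n. E n \<in> sets (sample_space n) \<and>
              (\<forall>\<omega>\<in>E n. \<exists>vs. graph_monotone_path
                   (\<omega> ` {..<n} \<union> {S, T})
                   (f n * (ln (real n) / real n) powr (1 / real CARD('d))) S T vs
                 \<and> set_cost M (polyline_image vs) \<le> ereal (1 + \<epsilon>) * path_cost M \<sigma>_star))
           \<and> (\<lambda>n. measure (sample_space n) (E n)) \<longlonglongrightarrow> 1"
proof (intro allI impI)
  fix \<epsilon> :: real assume eps: "\<epsilon> > 0"
  have rob: "robust_path M S T \<sigma>_star" and mon: "monotone_path \<sigma>_star"
    using opt by (auto simp: robustly_optimal_monotone_def)
  obtain \<delta> where \<delta>: "\<delta> > 0" and \<delta>H: "\<forall>\<sigma>'\<in>paths_ST S T. \<sigma>' ` {0..1} \<subseteq> tube \<delta> \<sigma>_star \<longrightarrow>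
      path_cost M \<sigma>' \<le> ereal (1 + \<epsilon>) * path_cost M \<sigma>_star"
    using rob eps unfolding robust_path_def by blast
  have sig: "\<sigma>_star \<in> paths_ST S T" using rob by (simp add: robust_path_def)
  have gap: "T$i - S$i \<ge> \<delta>''" for i
  proof -
    have "Min (range (\<lambda>i. T$i - S$i)) \<le> T$i - S$i" by (rule Min_le) auto
    moreover have "Min (range (\<lambda>i. T$i - S$i)) = \<delta>''" using ST unfolding prec_delta_def by blast
    ultimately show ?thesis by linarith
  qed
  obtain C m0 where C: "C > 0" "m0 > 0" and H: "\<forall>m\<ge>m0. \<forall>V. (\<forall>j\<in>grid m. \<exists>x\<in>V. x \<in> gbox m j) \<longrightarrow>
     (\<exists>vs. graph_monotone_path (V \<union> {S,T}) (C / real m) S T vs \<and>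
           polyline_image vs \<subseteq> tube \<delta> \<sigma>_star \<and> polyline_image vs \<subseteq> unit_cube)"
    using det[OF sig mon gap \<delta>_pos \<delta>] by blast
  define D where "D = CARD('d)"
  have D1: "D \<ge> 1" unfolding D_def using card_ge_0_finite[of "UNIV :: 'd set"] by simp
  define r where "r n = f n * (ln (real n) / real n) powr (1 / real D)" for n
  define mm where "mm n = nat \<lceil>C / min (r n) (C / real m0)\<rceil>" for n
  define P where "P n \<longleftrightarrow> n \<ge> 2 \<and> mm n \<ge> m0 \<and> C / real (mm n) \<le> r n \<and>
     real n / real (mm n) ^ D \<ge> 2 * ln (real n)" for n
  have evP: "eventually P sequentially"
    using choose_m[OF C(1) _ D1 f_lim, of m0] C(2) unfolding P_def mm_def r_def by simp
  define E where "E n = (if P n then (good n (mm n) :: (nat \<Rightarrow> real^'d) set) else {})" for n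
  show "\<exists>E :: nat \<Rightarrow> (nat \<Rightarrow> real ^ 'd) set.
           (\<forall>n. E n \<in> sets (sample_space n) \<and>
              (\<forall>\<omega>\<in>E n. \<exists>vs. graph_monotone_path
                   (\<omega> ` {..<n} \<union> {S, T})
                   (f n * (ln (real n) / real n) powr (1 / real CARD('d))) S T vs
                 \<and> set_cost M (polyline_image vs) \<le> ereal (1 + \<epsilon>) * path_cost M \<sigma>_star))
           \<and> (\<lambda>n. measure (sample_space n) (E n)) \<longlonglongrightarrow> 1"
  proof (rule exI[of _ E], rule conjI, rule allI)
    fix n
    show "E n \<in> sets (sample_space n) \<and>
              (\<forall>\<omega>\<in>E n. \<exists>vs. graph_monotone_path
                   (\<omega> ` {..<n} \<union> {S, T})
                   (f n * (ln (real n) / real n) powr (1 / real CARD('d))) S T vs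
                 \<and> set_cost M (polyline_image vs) \<le> ereal (1 + \<epsilon>) * path_cost M \<sigma>_star)"
    proof (cases "P n")
      case False then show ?thesis by (simp add: E_def)
    next
      case True
      then have En: "E n = good n (mm n)" by (simp add: E_def)
      have Pn: "mm n \<ge> m0" "C / real (mm n) \<le> r n" using True by (auto simp: P_def)
      show ?thesis
      proof (intro conjI ballI)
        show "E n \<in> sets (sample_space n)" unfolding En by (rule good_sets_and_prob(1))
        fix \<omega> assume "\<omega> \<in> E n"
        then have \<omega>: "\<omega> \<in> good n (mm n)" using En by simp
        have occ: "\<forall>j\<in>grid (mm n). \<exists>x\<in>\<omega> ` {..<n}. x \<in> gbox (mm n) j"
          using good_prop[OF \<omega>] by blast
        obtain vs where vs: "graph_monotone_path (\<omega> ` {..<n} \<union> {S,T}) (C / real (mm n)) S T vs"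
          "polyline_image vs \<subseteq> tube \<delta> \<sigma>_star" "polyline_image vs \<subseteq> unit_cube"
          using H Pn(1) occ by blast
        have g: "graph_monotone_path (\<omega> ` {..<n} \<union> {S,T}) (f n * (ln (real n) / real n) powr (1 / real CARD('d))) S T vs"
          using gmp_mono[OF vs(1)] Pn(2) by (simp add: r_def D_def)
        show "\<exists>vs. graph_monotone_path
                   (\<omega> ` {..<n} \<union> {S, T})
                   (f n * (ln (real n) / real n) powr (1 / real CARD('d))) S T vs
                 \<and> set_cost M (polyline_image vs) \<le> ereal (1 + \<epsilon>) * path_cost M \<sigma>_star"
          using g cost_poly[OF \<delta>H vs(1) vs(2) vs(3)] by blast
      qed
    qed
  next
    have ps: "prob_space (sample_space n :: (nat \<Rightarrow> real^'d) measure)" for n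
      unfolding sample_space_def by (rule prob_space_PiM) (rule prob_unif)
    have ub: "\<forall>\<^sub>F n in sequentially. measure (sample_space n) (E n) \<le> 1"
      using prob_space.prob_le_1[OF ps] by simp
    have lb: "\<forall>\<^sub>F n in sequentially. 1 - 1 / real n \<le> measure (sample_space n) (E n)"
    proof (rule eventually_mono[OF evP])
      fix n assume Pn: "P n"
      then have n2: "n \<ge> 2" and mm0: "mm n \<ge> m0" and X: "real n / real (mm n) ^ D \<ge> 2 * ln (real n)"
        by (auto simp: P_def)
      have mm1: "mm n \<ge> 1" using mm0 C(2) by simp
      have "1 - 1 / real n \<le> 1 - real (mm n) ^ CARD('d) * (1 - (1 / real (mm n)) ^ CARD('d)) ^ n"
        using tail[OF D1 mm1 n2 X] by (simp add: D_def)
      also have "\<dots> \<le> measure (sample_space n) (good n (mm n) :: (nat \<Rightarrow> real^'d) set)"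
        by (rule good_sets_and_prob(2))
      finally show "1 - 1 / real n \<le> measure (sample_space n) (E n)" using Pn by (simp add: E_def)
    qed
    have lim: "(\<lambda>n. 1 - 1 / real n) \<longlonglongrightarrow> (1::real)"
      using tendsto_diff[OF tendsto_const lim_1_over_n, of 1] by simp
    show "(\<lambda>n. measure (sample_space n) (E n)) \<longlonglongrightarrow> 1"
      by (rule tendsto_sandwich[OF lb ub lim tendsto_const])
  qed
qed

end
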